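(* Let $\Gamma$ be a countable digraph such that (C1) ${\rm desc}(u)\cong\Gamma$ for all $u\in\Gamma$, and (C2) for every finitely generated descendant-closed subdigraph $X$ of $\Gamma$, the subgroup of ${\rm Aut}(X)$ of automorphisms extending to automorphisms of $\Gamma$ has countable index in ${\rm Aut}(X)$. Let $\mathcal C_\Gamma$ be the class of digraphs $A$ such that (D1) ${\rm desc}(a)\cong\Gamma$ for all $a\in A$, (D2) $A$ is finitely generated, and (D3) ${\rm desc}(a)\cap{\rm desc}(b)$ is finitely generated for all $a,b\in A$. Then for every $A\in\mathcal C_\Gamma$ there are only countably many isomorphism types of $\le$-embeddings $f:A\to B$ with $B\in\mathcal C_\Gamma$.
   Context: Subdigraphs are full induced subdigraphs. For a digraph, an $s$-arc ($s\ge0$) from $u_0$ to $u_s$ is a sequence $u_0\ldots u_s$ with each $(u_i,u_{i+1})$ a directed edge and $u_{i-1}\ne u_{i+1}$ for $0<i<s$; ${\rm desc}(u)$ is the set of vertices reachable from $u$ by an $s$-arc for some $s\ge0$ (as an induced subdigraph), and ${\rm desc}(Y)=\bigcup_{y\in Y}{\rm desc}(y)$. $A\le B$ (descendant-closed) means ${\rm desc}_B(a)\subseteq A$ for all $a\in A$; a descendant-closed set (or a digraph) is finitely generated if it equals ${\rm desc}(Z)$ for some finite set $Z$ of its vertices. A $\le$-embedding is an embedding $f:A\to B$ onto an induced subdigraph with $f(A)\le B$. Two $\le$-embeddings $f_1:A\to B_1$, $f_2:A\to B_2$ are isomorphic if there is an isomorphism $h:B_1\to B_2$ with $f_2=h\circ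 f_1$; isomorphism types are counted with respect to this relation, with $B$ varying over $\mathcal C_\Gamma$. *)

theory Defs
  imports Main "HOL-Library.Countable_Set"
begin

record 'a digraph =
  verts :: "'a set"
  arcs  :: "('a \<times> 'a) set"

definition wf_digraph :: "('a, 'm) digraph_scheme \<Rightarrow> bool" where
  "wf_digraph G \<longleftrightarrow> arcs G \<subseteq> verts G \<times> verts G \<and> (\<forall>x. (x, x) \<notin> arcs G)"

definition induced :: "'a digraph \<Rightarrow> 'a set \<Rightarrow> 'a digraph" where
  "induced G S = \<lparr>verts = S \<inter> verts G, arcs = arcs G \<inter> (S \<times> S)\<rparr>"

definition s_arc :: "'a digraph \<Rightarrow> 'a list \<Rightarrow> bool" where
  "s_arc G p \<longleftrightarrow> p \<noteq> [] \<and> set p \<subseteq> verts G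
     \<and> (\<forall>i. Suc i < length p \<longrightarrow> (p ! i, p ! Suc i) \<in> arcs G)
     \<and> (\<forall>i. 0 < i \<and> Suc i < length p \<longrightarrow> p ! (i - 1) \<noteq> p ! Suc i)"

definition desc :: "'a digraph \<Rightarrow> 'a \<Rightarrow> 'a set" where
  "desc G u = {last p | p. s_arc G p \<and> hd p = u}"

definition desc_set :: "'a digraph \<Rightarrow> 'a set \<Rightarrow> 'a set" where
  "desc_set G Y = (\<Union>y\<in>Y. desc G y)"

definition desc_closed :: "'a digraph \<Rightarrow> 'a set \<Rightarrow> bool" where
  "desc_closed G A \<longleftrightarrow> A \<subseteq> verts G \<and> (\<forall>a\<in>A. desc G a \<subseteq> A)"

definition fg_set :: "'a digraph \<Rightarrow> 'a set \<Rightarrow> bool" where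
  "fg_set G A \<longleftrightarrow> (\<exists>Z. finite Z \<and> Z \<subseteq> A \<and> A = desc_set G Z)"

definition fg_digraph :: "'a digraph \<Rightarrow> bool" where
  "fg_digraph G \<longleftrightarrow> fg_set G (verts G)"

definition iso_map :: "'a digraph \<Rightarrow> 'b digraph \<Rightarrow> ('a \<Rightarrow> 'b) \<Rightarrow> bool" where
  "iso_map G H h \<longleftrightarrow> bij_betw h (verts G) (verts H)
     \<and> (\<forall>x\<in>verts G. \<forall>y\<in>verts G. (x, y) \<in> arcs G \<longleftrightarrow> (h x, h y) \<in> arcs H)"

definition isomorphic :: "'a digraph \<Rightarrow> 'b digraph \<Rightarrow> bool" where
  "isomorphic G H \<longleftrightarrow> (\<exists>h. iso_map G H h)"

definition Aut :: "'a digraph \<Rightarrow> ('a \<Rightarrow> 'a) set" where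
  "Aut X = {h. iso_map X X h \<and> (\<forall>x. x \<notin> verts X \<longrightarrow> h x = x)}"

definition ext_auts :: "'a digraph \<Rightarrow> 'a set \<Rightarrow> ('a \<Rightarrow> 'a) set" where
  "ext_auts G X = {h \<in> Aut (induced G X). \<exists>g\<in>Aut G. \<forall>x\<in>X. g x = h x}"

definition left_cosets :: "'a digraph \<Rightarrow> ('a \<Rightarrow> 'a) set \<Rightarrow> ('a \<Rightarrow> 'a) set set" where
  "left_cosets X K = {(\<lambda>k. h \<circ> k) ` K | h. h \<in> Aut X}"

definition in_C :: "'a digraph \<Rightarrow> 'b digraph \<Rightarrow> bool" where
  "in_C \<Gamma> A \<longleftrightarrow> wf_digraph A
     \<and> (\<forall>a\<in>verts A. isomorphic (induced A (desc A a)) \<Gamma>)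
     \<and> fg_digraph A
     \<and> (\<forall>a\<in>verts A. \<forall>b\<in>verts A. fg_digraph (induced A (desc A a \<inter> desc A b)))"

definition le_embedding :: "('c \<Rightarrow> 'b) \<Rightarrow> 'c digraph \<Rightarrow> 'b digraph \<Rightarrow> bool" where
  "le_embedding f A B \<longleftrightarrow> inj_on f (verts A) \<and> f ` verts A \<subseteq> verts B
     \<and> (\<forall>x\<in>verts A. \<forall>y\<in>verts A. (x, y) \<in> arcs A \<longleftrightarrow> (f x, f y) \<in> arcs B)
     \<and> desc_closed B (f ` verts A)"

definition emb_iso :: "'c digraph \<Rightarrow> ('c \<Rightarrow> 'b) \<times> 'b digraph \<Rightarrow> ('c \<Rightarrow> 'b) \<times> 'b digraph \<Rightarrow> bool" where
  "emb_iso A e1 e2 \<longleftrightarrow> (\<exists>h. iso_map (snd e1) (snd e2) h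
       \<and> (\<forall>x\<in>verts A. fst e2 x = h (fst e1 x)))"

end

theory Submission
  imports Defs
begin



lemma desc_sub_verts: "desc G u \<subseteq> verts G"
  unfolding desc_def s_arc_def by (auto intro!: last_in_set dest!: subsetD)

lemma self_in_desc: "u \<in> verts G \<Longrightarrow> u \<in> desc G u"
  unfolding desc_def s_arc_def by (rule CollectI, rule exI[of _ "[u]"]) auto

lemma s_arc_take: "s_arc G p \<Longrightarrow> 0 < n \<Longrightarrow> s_arc G (take n p)"
  unfolding s_arc_def by (auto dest: in_set_takeD)

lemma s_arc_set_desc: assumes "s_arc G p" "x \<in> set p" shows "x \<in> desc G (hd p)"
proof -
  obtain i where i: "i < length p" "p ! i = x" using assms(2) by (auto simp: in_set_conv_nth)
  have "s_arc G (take (Suc i) p)" using s_arc_take[OF assms(1)] by simp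
  moreover have "last (take (Suc i) p) = x" using i by (simp add: take_Suc_conv_app_nth)
  moreover have "hd (take (Suc i) p) = hd p" using i by (cases p) auto
  ultimately show ?thesis unfolding desc_def by blast
qed

lemma desc_succ:
  assumes wf: "wf_digraph G" and x: "x \<in> desc G u" and a: "(x,y) \<in> arcs G"
  shows "y \<in> desc G u"
proof -
  obtain p where p: "s_arc G p" "hd p = u" "last p = x" using x unfolding desc_def by blast
  show ?thesis
  proof (cases "2 \<le> length p \<and> p ! (length p - 2) = y")
    case True
    then have "y \<in> set p" by (metis diff_less nth_mem length_greater_0_conv p(1) s_arc_def zero_less_numeral)
    then show ?thesis using s_arc_set_desc[OF p(1)] p(2) by blast
  next
    case nb: False
    have yv: "y \<in> verts G" using wf a unfolding wf_digraph_def by auto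
    have ne: "p \<noteq> []" using p(1) s_arc_def by blast
    have lx: "p ! (length p - 1) = x" using p(3) ne by (simp add: last_conv_nth)
    have "s_arc G (p @ [y])"
      unfolding s_arc_def
    proof (intro conjI allI impI)
      show "p @ [y] \<noteq> []" by simp
      show "set (p @ [y]) \<subseteq> verts G" using p(1) yv unfolding s_arc_def by auto
    next
      fix i assume i: "Suc i < length (p @ [y])"
      show "((p @ [y]) ! i, (p @ [y]) ! Suc i) \<in> arcs G"
      proof (cases "Suc i < length p")
        case True then show ?thesis using p(1) unfolding s_arc_def by (auto simp: nth_append)
      next
        case False then have "i = length p - 1" using i by simp
        then show ?thesis using a lx ne by (auto simp: nth_append)
      qed
    next
      fix i assume i: "0 < i \<and> Suc i < length (p @ [y])"
      show "(p @ [y]) ! (i - 1) \<noteq> (p @ [y]) ! Suc i"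
      proof (cases "Suc i < length p")
        case True then show ?thesis using p(1) i unfolding s_arc_def by (auto simp: nth_append)
      next
        case False then have e: "Suc i = length p" using i by simp
        then have "i - 1 = length p - 2" "i - 1 < length p" by auto
        then show ?thesis using False e i nb by (auto simp: nth_append)
      qed
    qed
    moreover have "hd (p @ [y]) = u" using p ne by simp
    ultimately show ?thesis unfolding desc_def by (intro CollectI exI[of _ "p @ [y]"]) simp
  qed
qed



lemma verts_induced[simp]: "verts (induced G S) = S \<inter> verts G"
  by (simp add: induced_def)

lemma arcs_induced[simp]: "arcs (induced G S) = arcs G \<inter> (S \<times> S)"
  by (simp add: induced_def)

definition succ_closed :: "'a digraph \<Rightarrow> 'a set \<Rightarrow> bool" where
  "succ_closed G S \<longleftrightarrow> S \<subseteq> verts G \<and> (\<forall>x\<in>S. \<forall>y. (x,y) \<in> arcs G \<longrightarrow> y \<in> S)"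

lemma s_arc_in_closed:
  assumes "succ_closed G S" "s_arc G p" "hd p \<in> S"
  shows "set p \<subseteq> S"
proof -
  have "\<forall>i<length p. p ! i \<in> S"
  proof (intro allI impI)
    fix i show "i < length p \<Longrightarrow> p ! i \<in> S"
    proof (induction i)
      case 0 then show ?case using assms by (simp add: hd_conv_nth)
    next
      case (Suc i) then have "(p ! i, p ! Suc i) \<in> arcs G" using assms(2) unfolding s_arc_def by blast
      then show ?case using Suc assms(1) unfolding succ_closed_def by auto
    qed
  qed
  then show ?thesis by (auto simp: in_set_conv_nth)
qed

lemma desc_closed_iff: assumes wf: "wf_digraph G" shows "desc_closed G S \<longleftrightarrow> succ_closed G S"
proof
  assume d: "desc_closed G S"
  have sv: "S \<subseteq> verts G" and dd: "\<And>a. a \<in> S \<Longrightarrow> desc G a \<subseteq> S"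
    using d unfolding desc_closed_def by auto
  have "\<forall>x\<in>S. \<forall>y. (x,y) \<in> arcs G \<longrightarrow> y \<in> S"
  proof (intro ballI allI impI)
    fix x y assume x: "x \<in> S" and a: "(x,y) \<in> arcs G"
    have "x \<in> verts G" using sv x by blast
    then have "x \<in> desc G x" by (rule self_in_desc)
    then have "y \<in> desc G x" using desc_succ[OF wf _ a] by blast
    then show "y \<in> S" using dd[OF x] by blast
  qed
  then show "succ_closed G S" unfolding succ_closed_def using sv by blast
next
  assume s: "succ_closed G S"
  have sv: "S \<subseteq> verts G" using s unfolding succ_closed_def by blast
  have "\<forall>a\<in>S. desc G a \<subseteq> S"
  proof (intro ballI subsetI)
    fix a x assume a: "a \<in> S" and x: "x \<in> desc G a"
    then obtain p where p: "s_arc G p" "hd p = a" "last p = x" unfolding desc_def by blast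
    then have sp: "set p \<subseteq> S" using s_arc_in_closed[OF s] a by blast
    have "p \<noteq> []" using p(1) unfolding s_arc_def by blast
    then have "last p \<in> set p" by (rule last_in_set)
    then show "x \<in> S" using sp p(3) by blast
  qed
  then show "desc_closed G S" unfolding desc_closed_def using sv by blast
qed

lemma desc_closed_desc: assumes wf: "wf_digraph G" shows "desc_closed G (desc G u)"
proof -
  have "succ_closed G (desc G u)" unfolding succ_closed_def
  proof (intro conjI ballI allI impI)
    show "desc G u \<subseteq> verts G" by (rule desc_sub_verts)
    fix x y assume "x \<in> desc G u" "(x, y) \<in> arcs G"
    then show "y \<in> desc G u" by (rule desc_succ[OF wf])
  qed
  then show ?thesis using desc_closed_iff[OF wf] by blast
qed

lemma desc_closed_Union: "(\<And>i. i \<in> I \<Longrightarrow> desc_closed G (S i)) \<Longrightarrow> desc_closed G (\<Union>i\<in>I. S i)"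
  unfolding desc_closed_def by blast

lemma desc_closed_Un: "desc_closed G S \<Longrightarrow> desc_closed G T \<Longrightarrow> desc_closed G (S \<union> T)"
  unfolding desc_closed_def by blast

lemma desc_closed_Int: "desc_closed G S \<Longrightarrow> desc_closed G T \<Longrightarrow> desc_closed G (S \<inter> T)"
  unfolding desc_closed_def by blast

lemma desc_closed_desc_set: assumes wf: "wf_digraph G" shows "desc_closed G (desc_set G Z)"
  unfolding desc_set_def by (rule desc_closed_Union) (rule desc_closed_desc[OF wf])

lemma s_arc_induced: assumes "s_arc G p" "set p \<subseteq> S" shows "s_arc (induced G S) p"
proof -
  have a1: "\<forall>i. Suc i < length p \<longrightarrow> p ! i \<in> S \<and> p ! Suc i \<in> S"
    using assms(2) by (meson Suc_lessD nth_mem subsetD)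
  have ne: "p \<noteq> []" and sv: "set p \<subseteq> verts G"
    and ar: "\<forall>i. Suc i < length p \<longrightarrow> (p ! i, p ! Suc i) \<in> arcs G"
    and nb: "\<forall>i. 0 < i \<and> Suc i < length p \<longrightarrow> p ! (i - 1) \<noteq> p ! Suc i"
    using assms(1) unfolding s_arc_def by blast+
  have ar2: "\<forall>i. Suc i < length p \<longrightarrow> (p ! i, p ! Suc i) \<in> arcs (induced G S)"
    using a1 ar by simp
  have "set p \<subseteq> verts (induced G S)" using sv assms(2) by simp
  then show ?thesis using ne ar2 nb unfolding s_arc_def by blast
qed

lemma s_arc_induced_D: assumes "s_arc (induced G S) p" shows "s_arc G p"
proof -
  have ne: "p \<noteq> []" and sv: "set p \<subseteq> verts (induced G S)"
    and ar: "\<forall>i. Suc i < length p \<longrightarrow> (p ! i, p ! Suc i) \<in> arcs (induced G S)"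
    and nb: "\<forall>i. 0 < i \<and> Suc i < length p \<longrightarrow> p ! (i - 1) \<noteq> p ! Suc i"
    using assms(1) unfolding s_arc_def by blast+
  have "set p \<subseteq> verts G" using sv by auto
  moreover have "\<forall>i. Suc i < length p \<longrightarrow> (p ! i, p ! Suc i) \<in> arcs G" using ar by auto
  ultimately show ?thesis using ne nb unfolding s_arc_def by blast
qed

lemma desc_induced:
  assumes d: "desc_closed G S" and x: "x \<in> S"
  shows "desc (induced G S) x = desc G x"
proof
  show "desc (induced G S) x \<subseteq> desc G x"
    unfolding desc_def using s_arc_induced_D by blast
next
  show "desc G x \<subseteq> desc (induced G S) x"
  proof
    fix y assume "y \<in> desc G x"
    then obtain p where p: "s_arc G p" "hd p = x" "last p = y" unfolding desc_def by blast
    have "set p \<subseteq> desc G x" using s_arc_set_desc[OF p(1)] p(2) by blast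
    then have sp: "set p \<subseteq> S" using d x unfolding desc_closed_def by blast
    have "s_arc (induced G S) p" using s_arc_induced[OF p(1) sp] .
    then show "y \<in> desc (induced G S) x" using p unfolding desc_def by blast
  qed
qed

lemma wf_induced: "wf_digraph G \<Longrightarrow> wf_digraph (induced G S)"
  unfolding wf_digraph_def induced_def by auto

lemma induced_induced: "induced (induced G S) T = induced G (T \<inter> S)"
  unfolding induced_def by auto

lemma induced_verts: "wf_digraph G \<Longrightarrow> induced G (verts G) = G"
  unfolding induced_def wf_digraph_def by (cases G) auto




lemma iso_mapD:
  assumes "iso_map G H h"
  shows "bij_betw h (verts G) (verts H)" "inj_on h (verts G)" "h ` verts G = verts H"
    "\<And>x y. x \<in> verts G \<Longrightarrow> y \<in> verts G \<Longrightarrow> (x, y) \<in> arcs G \<longleftrightarrow> (h x, h y) \<in> arcs H"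
  using assms unfolding iso_map_def bij_betw_def by auto

lemma iso_map_inv:
  assumes iso: "iso_map G H h"
  shows "iso_map H G (inv_into (verts G) h)"
proof -
  have b: "bij_betw (inv_into (verts G) h) (verts H) (verts G)"
    using iso_mapD(1)[OF iso] by (rule bij_betw_inv_into)
  have "\<forall>x\<in>verts H. \<forall>y\<in>verts H. (x, y) \<in> arcs H \<longleftrightarrow>
        (inv_into (verts G) h x, inv_into (verts G) h y) \<in> arcs G"
  proof (intro ballI)
    fix x y assume x: "x \<in> verts H" and y: "y \<in> verts H"
    have ix: "inv_into (verts G) h x \<in> verts G" and iy: "inv_into (verts G) h y \<in> verts G"
      using x y iso_mapD(3)[OF iso] by (auto intro: inv_into_into)
    have hx: "h (inv_into (verts G) h x) = x" and hy: "h (inv_into (verts G) h y) = y"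
      using x y iso_mapD(3)[OF iso] by (auto intro: f_inv_into_f)
    show "(x, y) \<in> arcs H \<longleftrightarrow> (inv_into (verts G) h x, inv_into (verts G) h y) \<in> arcs G"
      using iso_mapD(4)[OF iso ix iy] hx hy by simp
  qed
  then show ?thesis using b unfolding iso_map_def by blast
qed

lemma iso_map_comp:
  assumes 1: "iso_map G H h" and 2: "iso_map H K k"
  shows "iso_map G K (k \<circ> h)"
proof -
  have b: "bij_betw (k \<circ> h) (verts G) (verts K)"
    using bij_betw_trans iso_mapD(1)[OF 1] iso_mapD(1)[OF 2] by blast
  have "\<forall>x\<in>verts G. \<forall>y\<in>verts G. (x, y) \<in> arcs G \<longleftrightarrow> ((k \<circ> h) x, (k \<circ> h) y) \<in> arcs K"
  proof (intro ballI)
    fix x y assume x: "x \<in> verts G" and y: "y \<in> verts G"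
    have "h x \<in> verts H" "h y \<in> verts H" using x y iso_mapD(3)[OF 1] by auto
    then show "(x, y) \<in> arcs G \<longleftrightarrow> ((k \<circ> h) x, (k \<circ> h) y) \<in> arcs K"
      using iso_mapD(4)[OF 1 x y] iso_mapD(4)[OF 2] by simp
  qed
  then show ?thesis using b unfolding iso_map_def by blast
qed

lemma iso_map_cong:
  assumes "iso_map G H h" "\<And>x. x \<in> verts G \<Longrightarrow> h x = k x"
  shows "iso_map G H k"
proof -
  have "bij_betw k (verts G) (verts H)" using iso_mapD(1)[OF assms(1)] assms(2)
    using bij_betw_cong by blast
  moreover have "\<forall>x\<in>verts G. \<forall>y\<in>verts G. (x, y) \<in> arcs G \<longleftrightarrow> (k x, k y) \<in> arcs H"
    using iso_mapD(4)[OF assms(1)] assms(2) by simp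
  ultimately show ?thesis unfolding iso_map_def by blast
qed

lemma iso_map_restrict:
  assumes iso: "iso_map G H h" and S: "S \<subseteq> verts G"
  shows "iso_map (induced G S) (induced H (h ` S)) h"
proof -
  have i: "inj_on h (verts G)" and im: "h ` verts G = verts H" using iso_mapD[OF iso] by auto
  have "h ` S \<subseteq> verts H" using S im by blast
  then have "bij_betw h (S \<inter> verts G) (h ` S \<inter> verts H)"
    using S inj_on_subset[OF i S] unfolding bij_betw_def
    by (simp add: Int_absorb2)
  moreover have "\<forall>x\<in>S \<inter> verts G. \<forall>y\<in>S \<inter> verts G.
      (x, y) \<in> arcs G \<inter> S \<times> S \<longleftrightarrow> (h x, h y) \<in> arcs H \<inter> h ` S \<times> h ` S"
    using iso_mapD(4)[OF iso] by auto
  ultimately show ?thesis unfolding iso_map_def by simp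
qed

lemma s_arc_map:
  assumes iso: "iso_map G H h" and p: "s_arc G p"
  shows "s_arc H (map h p)"
proof -
  have ne: "p \<noteq> []" and sv: "set p \<subseteq> verts G"
    and ar: "\<forall>i. Suc i < length p \<longrightarrow> (p ! i, p ! Suc i) \<in> arcs G"
    and nb: "\<forall>i. 0 < i \<and> Suc i < length p \<longrightarrow> p ! (i - 1) \<noteq> p ! Suc i"
    using p unfolding s_arc_def by blast+
  have inj: "inj_on h (verts G)" and im: "h ` verts G = verts H" using iso_mapD[OF iso] by auto
  have nth: "\<And>i. i < length p \<Longrightarrow> p ! i \<in> verts G" using sv nth_mem by blast
  have 1: "set (map h p) \<subseteq> verts H" using sv im by auto
  have 2: "\<forall>i. Suc i < length (map h p) \<longrightarrow> (map h p ! i, map h p ! Suc i) \<in> arcs H"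
  proof (intro allI impI)
    fix i assume i: "Suc i < length (map h p)"
    then have "(p ! i, p ! Suc i) \<in> arcs G" using ar by simp
    then show "(map h p ! i, map h p ! Suc i) \<in> arcs H"
      using iso_mapD(4)[OF iso nth nth] i by simp
  qed
  have 3: "\<forall>i. 0 < i \<and> Suc i < length (map h p) \<longrightarrow> map h p ! (i - 1) \<noteq> map h p ! Suc i"
  proof (intro allI impI)
    fix i assume i: "0 < i \<and> Suc i < length (map h p)"
    then have "p ! (i - 1) \<noteq> p ! Suc i" using nb by simp
    moreover have "p ! (i - 1) \<in> verts G" "p ! Suc i \<in> verts G" using i nth by auto
    ultimately have "h (p ! (i - 1)) \<noteq> h (p ! Suc i)" using inj_onD[OF inj] by blast
    moreover have "i - 1 < length p" using i by (simp, arith)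
    ultimately show "map h p ! (i - 1) \<noteq> map h p ! Suc i" using i by simp
  qed
  show ?thesis unfolding s_arc_def using ne 1 2 3 by simp
qed

lemma desc_iso_sub:
  assumes iso: "iso_map G H h"
  shows "h ` desc G x \<subseteq> desc H (h x)"
proof
  fix y assume "y \<in> h ` desc G x"
  then obtain z where z: "z \<in> desc G x" "y = h z" by blast
  then obtain p where p: "s_arc G p" "hd p = x" "last p = z" unfolding desc_def by blast
  have ne: "p \<noteq> []" using p(1) unfolding s_arc_def by blast
  have "s_arc H (map h p)" by (rule s_arc_map[OF iso p(1)])
  moreover have "hd (map h p) = h x" "last (map h p) = y" using ne p z by (auto simp: hd_map last_map)
  ultimately show "y \<in> desc H (h x)" unfolding desc_def by blast
qed

lemma desc_iso:
  assumes iso: "iso_map G H h" and x: "x \<in> verts G"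
  shows "h ` desc G x = desc H (h x)"
proof
  show "h ` desc G x \<subseteq> desc H (h x)" by (rule desc_iso_sub[OF iso])
next
  let ?g = "inv_into (verts G) h"
  have iso2: "iso_map H G ?g" by (rule iso_map_inv[OF iso])
  have gx: "?g (h x) = x" using x iso_mapD(2)[OF iso] by (simp add: inv_into_f_f)
  have "?g ` desc H (h x) \<subseteq> desc G x" using desc_iso_sub[OF iso2, of "h x"] gx by simp
  then have "h ` ?g ` desc H (h x) \<subseteq> h ` desc G x" by blast
  moreover have "h ` ?g ` desc H (h x) = desc H (h x)"
  proof -
    have "\<And>y. y \<in> desc H (h x) \<Longrightarrow> h (?g y) = y"
    proof -
      fix y assume "y \<in> desc H (h x)"
      then have "y \<in> h ` verts G" using desc_sub_verts[of H] iso_mapD(3)[OF iso] by blast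
      then show "h (?g y) = y" by (rule f_inv_into_f)
    qed
    then show ?thesis by (simp add: image_image cong: image_cong)
  qed
  ultimately show "desc H (h x) \<subseteq> h ` desc G x" by simp
qed

lemma desc_set_iso:
  assumes iso: "iso_map G H h" and Z: "Z \<subseteq> verts G"
  shows "h ` desc_set G Z = desc_set H (h ` Z)"
proof -
  have "h ` desc_set G Z = (\<Union>z\<in>Z. h ` desc G z)" unfolding desc_set_def by blast
  also have "\<dots> = (\<Union>z\<in>Z. desc H (h z))" using desc_iso[OF iso] Z by (simp add: subset_iff)
  also have "\<dots> = desc_set H (h ` Z)" unfolding desc_set_def by blast
  finally show ?thesis .
qed

lemma desc_set_induced:
  assumes "desc_closed G S" "Z \<subseteq> S"
  shows "desc_set (induced G S) Z = desc_set G Z"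
  unfolding desc_set_def using desc_induced[OF assms(1)] assms(2) by (simp add: subset_iff)

lemma le_emb_iso:
  assumes "le_embedding f A B"
  shows "iso_map A (induced B (f ` verts A)) f"
proof -
  have i: "inj_on f (verts A)" and s: "f ` verts A \<subseteq> verts B"
    and a: "\<forall>x\<in>verts A. \<forall>y\<in>verts A. (x, y) \<in> arcs A \<longleftrightarrow> (f x, f y) \<in> arcs B"
    using assms unfolding le_embedding_def by blast+
  have "bij_betw f (verts A) (f ` verts A \<inter> verts B)" using i s unfolding bij_betw_def
    by (simp add: Int_absorb2)
  moreover have "\<forall>x\<in>verts A. \<forall>y\<in>verts A. (x, y) \<in> arcs A \<longleftrightarrow> (f x, f y) \<in> arcs B \<inter> (f ` verts A \<times> f ` verts A)"
    using a by blast
  ultimately show ?thesis unfolding iso_map_def by simp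
qed

lemma le_emb_desc_set:
  assumes le: "le_embedding f A B" and Z: "Z \<subseteq> verts A"
  shows "f ` desc_set A Z = desc_set B (f ` Z)"
proof -
  have dc: "desc_closed B (f ` verts A)" using le unfolding le_embedding_def by blast
  have "f ` desc_set A Z = desc_set (induced B (f ` verts A)) (f ` Z)"
    by (rule desc_set_iso[OF le_emb_iso[OF le] Z])
  also have "\<dots> = desc_set B (f ` Z)" using desc_set_induced[OF dc] Z by blast
  finally show ?thesis .
qed

lemma countable_in_C:
  assumes cnt: "countable (verts \<Gamma>)" and C: "in_C \<Gamma> B"
  shows "countable (verts B)"
proof -
  obtain Z where Z: "finite Z" "Z \<subseteq> verts B" "verts B = desc_set B Z"
    using C unfolding in_C_def fg_digraph_def fg_set_def by blast
  have "\<And>z. z \<in> Z \<Longrightarrow> countable (desc B z)"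
  proof -
    fix z assume z: "z \<in> Z"
    then have "isomorphic (induced B (desc B z)) \<Gamma>" using C Z unfolding in_C_def by blast
    then obtain h where h: "iso_map (induced B (desc B z)) \<Gamma> h" unfolding isomorphic_def by blast
    have "desc B z \<inter> verts B = desc B z" using desc_sub_verts[of B z] by blast
    then have "bij_betw h (desc B z) (verts \<Gamma>)" using iso_mapD(1)[OF h] by simp
    then have "inj_on h (desc B z)" "h ` desc B z = verts \<Gamma>" unfolding bij_betw_def by auto
    then show "countable (desc B z)" using cnt countable_image_inj_eq by metis
  qed
  then have "countable (desc_set B Z)" unfolding desc_set_def using countable_finite[OF Z(1)] by blast
  then show ?thesis using Z(3) by simp
qed

lemma emb_iso_sym:
  assumes e: "emb_iso A e1 e2" and v: "fst e1 ` verts A \<subseteq> verts (snd e1)"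
  shows "emb_iso A e2 e1"
proof -
  obtain h where h: "iso_map (snd e1) (snd e2) h" "\<forall>x\<in>verts A. fst e2 x = h (fst e1 x)"
    using e unfolding emb_iso_def by blast
  let ?g = "inv_into (verts (snd e1)) h"
  have "\<forall>x\<in>verts A. fst e1 x = ?g (fst e2 x)"
    using h(2) v iso_mapD(2)[OF h(1)] by (simp add: image_subset_iff inv_into_f_f)
  then show ?thesis unfolding emb_iso_def using iso_map_inv[OF h(1)] by blast
qed

lemma emb_iso_trans:
  assumes "emb_iso A e1 e2" "emb_iso A e2 e3"
  shows "emb_iso A e1 e3"
proof -
  obtain h where h: "iso_map (snd e1) (snd e2) h" "\<forall>x\<in>verts A. fst e2 x = h (fst e1 x)"
    using assms(1) unfolding emb_iso_def by blast
  obtain k where k: "iso_map (snd e2) (snd e3) k" "\<forall>x\<in>verts A. fst e3 x = k (fst e2 x)"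
    using assms(2) unfolding emb_iso_def by blast
  have "\<forall>x\<in>verts A. fst e3 x = (k \<circ> h) (fst e1 x)" using h(2) k(2) by simp
  then show ?thesis unfolding emb_iso_def using iso_map_comp[OF h(1) k(1)] by blast
qed




lemma desc_Int_verts[simp]: "desc G u \<inter> verts G = desc G u"
  using desc_sub_verts[of G u] by blast

lemma desc_closed_Int_verts: "desc_closed G D \<Longrightarrow> D \<inter> verts G = D"
  unfolding desc_closed_def by blast

definition glue :: "'b digraph \<Rightarrow> 'b set \<Rightarrow> ('b \<Rightarrow> 'b) \<Rightarrow> ('b \<Rightarrow> 'b) \<Rightarrow> ('b \<Rightarrow> 'a) \<Rightarrow> ('b \<Rightarrow> 'a)
   \<Rightarrow> ('a \<Rightarrow> 'a) \<Rightarrow> 'b set \<Rightarrow> 'b \<Rightarrow> 'b" where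
  "glue R D1 h1 h2 \<phi>1 \<phi>2 g E2 x =
     (if x \<in> D1 then h2 (inv_into (verts R) h1 x) else inv_into E2 \<phi>2 (g (\<phi>1 x)))"

locale glue_half =
  fixes \<Gamma> :: "'a digraph" and R :: "'b digraph"
    and B1 :: "'b digraph" and D1 :: "'b set" and b1 :: 'b and \<phi>1 :: "'b \<Rightarrow> 'a" and h1 :: "'b \<Rightarrow> 'b"
    and B2 :: "'b digraph" and D2 :: "'b set" and b2 :: 'b and \<phi>2 :: "'b \<Rightarrow> 'a" and h2 :: "'b \<Rightarrow> 'b"
    and g :: "'a \<Rightarrow> 'a"
  assumes wf1: "wf_digraph B1" and wf2: "wf_digraph B2"
    and D1: "desc_closed B1 D1" and D2: "desc_closed B2 D2"
    and phi1: "iso_map (induced B1 (desc B1 b1)) \<Gamma> \<phi>1"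
    and phi2: "iso_map (induced B2 (desc B2 b2)) \<Gamma> \<phi>2"
    and h1: "iso_map R (induced B1 D1) h1"
    and h2: "iso_map R (induced B2 D2) h2"
    and W: "\<forall>w\<in>verts R. h1 w \<in> desc B1 b1 \<longleftrightarrow> h2 w \<in> desc B2 b2"
    and g: "iso_map \<Gamma> \<Gamma> g"
    and compat: "\<forall>w\<in>verts R. h1 w \<in> desc B1 b1 \<longrightarrow> g (\<phi>1 (h1 w)) = \<phi>2 (h2 w)"
begin

abbreviation "E1 \<equiv> desc B1 b1"
abbreviation "E2 \<equiv> desc B2 b2"
abbreviation "H \<equiv> glue R D1 h1 h2 \<phi>1 \<phi>2 g E2"
abbreviation "k1 \<equiv> h2 \<circ> inv_into (verts R) h1"
abbreviation "k2 \<equiv> inv_into E2 \<phi>2 \<circ> (g \<circ> \<phi>1)"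

lemma k1_iso: "iso_map (induced B1 D1) (induced B2 D2) k1"
  using iso_map_comp[OF iso_map_inv[OF h1] h2] .

lemma phi2_inv: "iso_map \<Gamma> (induced B2 E2) (inv_into E2 \<phi>2)"
  using iso_map_inv[OF phi2] by simp

lemma k2_iso: "iso_map (induced B1 E1) (induced B2 E2) k2"
  using iso_map_comp[OF iso_map_comp[OF phi1 g] phi2_inv] .

lemma vR1: "h1 ` verts R = D1" using iso_mapD(3)[OF h1] desc_closed_Int_verts[OF D1] by simp
lemma vR2: "h2 ` verts R = D2" using iso_mapD(3)[OF h2] desc_closed_Int_verts[OF D2] by simp
lemma ph1: "\<phi>1 ` E1 = verts \<Gamma>" using iso_mapD(3)[OF phi1] by simp
lemma ph2: "\<phi>2 ` E2 = verts \<Gamma>" using iso_mapD(3)[OF phi2] by simp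
lemma inj_ph2: "inj_on \<phi>2 E2" using iso_mapD(2)[OF phi2] by simp
lemma gv: "g ` verts \<Gamma> = verts \<Gamma>" using iso_mapD(3)[OF g] .

lemma H_D1: assumes x: "x \<in> D1" shows "H x = k1 x" "H x \<in> D2"
proof -
  show "H x = k1 x" using x unfolding glue_def by simp
  have "inv_into (verts R) h1 x \<in> verts R" using x vR1 by (metis inv_into_into)
  then show "H x \<in> D2" using x vR2 unfolding glue_def by auto
qed

lemma H_E1: assumes x: "x \<in> E1" shows "H x = k2 x" "H x \<in> E2"
proof -
  show "H x = k2 x"
  proof (cases "x \<in> D1")
    case True
    define w where "w = inv_into (verts R) h1 x"
    have w: "w \<in> verts R" "h1 w = x" using True vR1 unfolding w_def by (auto intro: inv_into_into f_inv_into_f)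
    have c: "g (\<phi>1 x) = \<phi>2 (h2 w)" using compat w x by auto
    have "h2 w \<in> E2" using W w x by auto
    then have "inv_into E2 \<phi>2 (\<phi>2 (h2 w)) = h2 w" using inj_ph2 by (simp add: inv_into_f_f)
    then show ?thesis using True c unfolding glue_def w_def by simp
  next
    case False then show ?thesis unfolding glue_def by simp
  qed
  have "\<phi>1 x \<in> verts \<Gamma>" using x ph1 by blast
  then have "g (\<phi>1 x) \<in> \<phi>2 ` E2" using gv ph2 by blast
  then show "H x \<in> E2" using \<open>H x = k2 x\<close> by (simp add: inv_into_into)
qed

lemma H_arcs:
  assumes x: "x \<in> D1 \<union> E1" and y: "y \<in> D1 \<union> E1" and a: "(x, y) \<in> arcs B1"
  shows "(H x, H y) \<in> arcs B2"
proof (cases "x \<in> D1")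
  case True
  have "y \<in> D1" using True a D1 desc_closed_iff[OF wf1] unfolding succ_closed_def by blast
  then have "(x, y) \<in> arcs (induced B1 D1)" using True a by simp
  then have "(k1 x, k1 y) \<in> arcs (induced B2 D2)"
    using iso_mapD(4)[OF k1_iso] True \<open>y \<in> D1\<close> desc_closed_Int_verts[OF D1] by auto
  then show ?thesis using H_D1 True \<open>y \<in> D1\<close> by simp
next
  case False
  then have xe: "x \<in> E1" using x by blast
  have "y \<in> E1" using desc_succ[OF wf1 xe a] .
  then have "(x, y) \<in> arcs (induced B1 E1)" using xe a by simp
  then have "(k2 x, k2 y) \<in> arcs (induced B2 E2)"
    using iso_mapD(4)[OF k2_iso] xe \<open>y \<in> E1\<close> by auto
  then show ?thesis using H_E1 xe \<open>y \<in> E1\<close> by simp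
qed

lemma H_into: "H ` (D1 \<union> E1) \<subseteq> D2 \<union> E2"
  using H_D1 H_E1 by blast

end

lemma glue_half_swap:
  assumes "glue_half \<Gamma> R B1 D1 b1 \<phi>1 h1 B2 D2 b2 \<phi>2 h2 g"
  shows "glue_half \<Gamma> R B2 D2 b2 \<phi>2 h2 B1 D1 b1 \<phi>1 h1 (inv_into (verts \<Gamma>) g)"
proof -
  interpret glue_half \<Gamma> R B1 D1 b1 \<phi>1 h1 B2 D2 b2 \<phi>2 h2 g by fact
  have "\<forall>w\<in>verts R. h2 w \<in> E2 \<longrightarrow> inv_into (verts \<Gamma>) g (\<phi>2 (h2 w)) = \<phi>1 (h1 w)"
  proof (intro ballI impI)
    fix w assume w: "w \<in> verts R" "h2 w \<in> E2"
    then have "h1 w \<in> E1" using W by blast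
    then have c: "g (\<phi>1 (h1 w)) = \<phi>2 (h2 w)" using compat w by blast
    have "\<phi>1 (h1 w) \<in> verts \<Gamma>" using \<open>h1 w \<in> E1\<close> ph1 by blast
    then show "inv_into (verts \<Gamma>) g (\<phi>2 (h2 w)) = \<phi>1 (h1 w)"
      using c iso_mapD(2)[OF g] by (metis inv_into_f_f)
  qed
  then show ?thesis
    by unfold_locales (use wf1 wf2 D1 D2 phi1 phi2 h1 h2 W iso_map_inv[OF g] in auto)
qed

lemma glue_inv:
  assumes gh: "glue_half \<Gamma> R B1 D1 b1 \<phi>1 h1 B2 D2 b2 \<phi>2 h2 g"
    and gh': "glue_half \<Gamma> R B2 D2 b2 \<phi>2 h2 B1 D1 b1 \<phi>1 h1 g'"
    and gg: "\<forall>z\<in>verts \<Gamma>. g' (g z) = z"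
    and x: "x \<in> D1 \<union> desc B1 b1"
  shows "glue R D2 h2 h1 \<phi>2 \<phi>1 g' (desc B1 b1) (glue R D1 h1 h2 \<phi>1 \<phi>2 g (desc B2 b2) x) = x"
proof -
  interpret A: glue_half \<Gamma> R B1 D1 b1 \<phi>1 h1 B2 D2 b2 \<phi>2 h2 g by fact
  interpret B: glue_half \<Gamma> R B2 D2 b2 \<phi>2 h2 B1 D1 b1 \<phi>1 h1 g' by fact
  show ?thesis
  proof (cases "x \<in> D1")
    case True
    define w where "w = inv_into (verts R) h1 x"
    have w: "w \<in> verts R" "h1 w = x" using True A.vR1 unfolding w_def by (auto intro: inv_into_into f_inv_into_f)
    have "A.H x = h2 w" using A.H_D1(1)[OF True] w_def by simp
    moreover have "h2 w \<in> D2" using w A.vR2 by blast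
    ultimately have "B.H (A.H x) = h1 (inv_into (verts R) h2 (h2 w))" using B.H_D1(1) by simp
    also have "\<dots> = x" using w iso_mapD(2)[OF A.h2] by (simp add: inv_into_f_f)
    finally show ?thesis .
  next
    case False
    then have xe: "x \<in> A.E1" using x by blast
    have hx: "A.H x = inv_into A.E2 \<phi>2 (g (\<phi>1 x))" "A.H x \<in> A.E2" using A.H_E1[OF xe] by auto
    have z: "\<phi>1 x \<in> verts \<Gamma>" using xe A.ph1 by blast
    then have gz: "g (\<phi>1 x) \<in> \<phi>2 ` A.E2" using A.gv A.ph2 by blast
    have "B.H (A.H x) = inv_into A.E1 \<phi>1 (g' (\<phi>2 (A.H x)))" using B.H_E1(1)[OF hx(2)] by simp
    also have "\<phi>2 (A.H x) = g (\<phi>1 x)" using hx(1) gz by (simp add: f_inv_into_f)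
    also have "g' (g (\<phi>1 x)) = \<phi>1 x" using gg z by blast
    also have "inv_into A.E1 \<phi>1 (\<phi>1 x) = x" using xe iso_mapD(2)[OF A.phi1] by (simp add: inv_into_f_f)
    finally show ?thesis .
  qed
qed

lemma glue_iso:
  assumes gh: "glue_half \<Gamma> R B1 D1 b1 \<phi>1 h1 B2 D2 b2 \<phi>2 h2 g"
  shows "iso_map (induced B1 (D1 \<union> desc B1 b1)) (induced B2 (D2 \<union> desc B2 b2))
            (glue R D1 h1 h2 \<phi>1 \<phi>2 g (desc B2 b2))"
proof -
  let ?g' = "inv_into (verts \<Gamma>) g"
  have gh': "glue_half \<Gamma> R B2 D2 b2 \<phi>2 h2 B1 D1 b1 \<phi>1 h1 ?g'" by (rule glue_half_swap[OF gh])
  interpret A: glue_half \<Gamma> R B1 D1 b1 \<phi>1 h1 B2 D2 b2 \<phi>2 h2 g by fact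
  interpret B: glue_half \<Gamma> R B2 D2 b2 \<phi>2 h2 B1 D1 b1 \<phi>1 h1 ?g' by fact
  have gg1: "\<forall>z\<in>verts \<Gamma>. ?g' (g z) = z" using iso_mapD(2)[OF A.g] by (simp add: inv_into_f_f)
  have gg2: "\<forall>z\<in>verts \<Gamma>. g (?g' z) = z" using A.gv by (metis f_inv_into_f)
  have gh'': "glue_half \<Gamma> R B1 D1 b1 \<phi>1 h1 B2 D2 b2 \<phi>2 h2 g" by fact
  have inv1: "\<forall>x\<in>D1 \<union> A.E1. B.H (A.H x) = x" using glue_inv[OF gh gh' gg1] by blast
  have inv2: "\<forall>x\<in>D2 \<union> A.E2. A.H (B.H x) = x" using glue_inv[OF gh' gh gg2] by blast
  have bij: "bij_betw A.H (D1 \<union> A.E1) (D2 \<union> A.E2)"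
    by (rule bij_betw_byWitness[OF inv1 inv2 A.H_into B.H_into])
  have v1: "(D1 \<union> A.E1) \<inter> verts B1 = D1 \<union> A.E1" using desc_closed_Int_verts[OF A.D1] desc_sub_verts[of B1 b1] by blast
  have v2: "(D2 \<union> A.E2) \<inter> verts B2 = D2 \<union> A.E2" using desc_closed_Int_verts[OF A.D2] desc_sub_verts[of B2 b2] by blast
  have "\<forall>x\<in>D1 \<union> A.E1. \<forall>y\<in>D1 \<union> A.E1. (x, y) \<in> arcs B1 \<longleftrightarrow> (A.H x, A.H y) \<in> arcs B2"
  proof (intro ballI iffI)
    fix x y assume x: "x \<in> D1 \<union> A.E1" and y: "y \<in> D1 \<union> A.E1"
    { assume "(x, y) \<in> arcs B1" then show "(A.H x, A.H y) \<in> arcs B2" using A.H_arcs x y by blast }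
    { assume a: "(A.H x, A.H y) \<in> arcs B2"
      have "A.H x \<in> D2 \<union> A.E2" "A.H y \<in> D2 \<union> A.E2" using A.H_into x y by blast+
      then have "(B.H (A.H x), B.H (A.H y)) \<in> arcs B1" using B.H_arcs a by blast
      then show "(x, y) \<in> arcs B1" using inv1 x y by simp }
  qed
  then have "\<forall>x\<in>D1 \<union> A.E1. \<forall>y\<in>D1 \<union> A.E1. (x, y) \<in> arcs B1 \<inter> (D1 \<union> A.E1) \<times> (D1 \<union> A.E1)
      \<longleftrightarrow> (A.H x, A.H y) \<in> arcs B2 \<inter> (D2 \<union> A.E2) \<times> (D2 \<union> A.E2)"
    using A.H_into by blast
  then show ?thesis unfolding iso_map_def verts_induced arcs_induced v1 v2 using bij by blast
qed




definition theta0 :: "'a digraph \<Rightarrow> 'b digraph \<Rightarrow> 'a set \<Rightarrow> 'b set \<Rightarrow> 'b \<Rightarrow> 'a" where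
  "theta0 \<Gamma> R Y W = (SOME \<theta>. iso_map (induced R W) (induced \<Gamma> Y) \<theta>)"

definition tau :: "'a digraph \<Rightarrow> 'b digraph \<Rightarrow> 'a set \<Rightarrow> 'b set \<Rightarrow> ('b \<Rightarrow> 'a) \<Rightarrow> 'a \<Rightarrow> 'a" where
  "tau \<Gamma> R Y W \<theta> = (\<lambda>y. if y \<in> Y then theta0 \<Gamma> R Y W (inv_into W \<theta> y) else y)"

definition good :: "'a digraph \<Rightarrow> 'c digraph \<Rightarrow> ('c \<Rightarrow> 'b) \<times> 'b digraph
   \<Rightarrow> (('c \<Rightarrow> 'b) \<times> 'b digraph) \<times> 'a set \<times> 'b set \<times> ('a \<Rightarrow> 'a) set \<Rightarrow> bool" where
  "good \<Gamma> A e c \<longleftrightarrow> (\<exists>f B D b \<phi> h. e = (f, induced B (D \<union> desc B b)) \<and> wf_digraph B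
     \<and> desc_closed B D \<and> f ` verts A \<subseteq> D \<and> b \<in> verts B
     \<and> iso_map (induced B (desc B b)) \<Gamma> \<phi> \<and> iso_map (snd (fst c)) (induced B D) h
     \<and> (\<forall>x\<in>verts A. f x = h (fst (fst c) x)) \<and> (\<forall>x\<in>verts A. fst (fst c) x \<in> verts (snd (fst c)))
     \<and> fst (snd c) = \<phi> ` (desc B b \<inter> D)
     \<and> fst (snd (snd c)) = {w \<in> verts (snd (fst c)). h w \<in> desc B b}
     \<and> snd (snd (snd c)) = (\<lambda>k. tau \<Gamma> (snd (fst c)) (fst (snd c)) (fst (snd (snd c))) (\<phi> \<circ> h) \<circ> k)
                              ` ext_auts \<Gamma> (fst (snd c)))"

lemma theta_iso:
  assumes D: "desc_closed B D" and phi: "iso_map (induced B (desc B b)) \<Gamma> \<phi>"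
    and h: "iso_map R (induced B D) h"
    and Y: "Y = \<phi> ` (desc B b \<inter> D)" and W: "W = {w \<in> verts R. h w \<in> desc B b}"
  shows "iso_map (induced R W) (induced \<Gamma> Y) (\<phi> \<circ> h)"
proof -
  have vR: "h ` verts R = D" using iso_mapD(3)[OF h] desc_closed_Int_verts[OF D] by simp
  have WR: "W \<subseteq> verts R" using W by blast
  have hW: "h ` W = desc B b \<inter> D" using vR W by blast
  have 1: "iso_map (induced R W) (induced B (desc B b \<inter> D)) h"
    using iso_map_restrict[OF h, of W] WR hW by (simp add: induced_induced Int_absorb2)
  have "desc B b \<inter> D \<subseteq> verts (induced B (desc B b))" by auto
  then have 2: "iso_map (induced B (desc B b \<inter> D)) (induced \<Gamma> Y) \<phi>"
    using iso_map_restrict[OF phi, of "desc B b \<inter> D"] Y by (simp add: induced_induced Int_absorb2)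
  show ?thesis using iso_map_comp[OF 1 2] .
qed

lemma id_ext_auts: "Y \<subseteq> verts \<Gamma> \<Longrightarrow> id \<in> ext_auts \<Gamma> Y"
proof -
  have i: "\<And>X :: 'a digraph. id \<in> Aut X" unfolding Aut_def iso_map_def by simp
  have "\<exists>g\<in>Aut \<Gamma>. \<forall>x\<in>Y. g x = id x" using i[of \<Gamma>] by blast
  then show ?thesis unfolding ext_auts_def using i[of "induced \<Gamma> Y"] by blast
qed

lemma tau_Aut:
  assumes th: "iso_map (induced R W) (induced \<Gamma> Y) \<theta>" and W: "W \<subseteq> verts R" and Y: "Y \<subseteq> verts \<Gamma>"
  shows "tau \<Gamma> R Y W \<theta> \<in> Aut (induced \<Gamma> Y)"
proof -
  have t0: "iso_map (induced R W) (induced \<Gamma> Y) (theta0 \<Gamma> R Y W)"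
    unfolding theta0_def using someI[where P="iso_map (induced R W) (induced \<Gamma> Y)", OF th] .
  have vW: "verts (induced R W) = W" using W by auto
  have vY: "verts (induced \<Gamma> Y) = Y" using Y by auto
  have "iso_map (induced \<Gamma> Y) (induced \<Gamma> Y) (theta0 \<Gamma> R Y W \<circ> inv_into W \<theta>)"
    using iso_map_comp[OF iso_map_inv[OF th] t0] vW by simp
  then have "iso_map (induced \<Gamma> Y) (induced \<Gamma> Y) (tau \<Gamma> R Y W \<theta>)"
    by (rule iso_map_cong) (simp add: vY tau_def)
  moreover have "\<forall>x. x \<notin> verts (induced \<Gamma> Y) \<longrightarrow> tau \<Gamma> R Y W \<theta> x = x" using vY by (simp add: tau_def)
  ultimately show ?thesis unfolding Aut_def by blast
qed

lemma good_unique: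
  assumes g1: "good \<Gamma> A e1 c" and g2: "good \<Gamma> A e2 c"
  shows "emb_iso A e1 e2"
proof -
  obtain r Y W Cos where c: "c = (r, Y, W, Cos)" by (cases c) auto
  let ?R = "snd r"
  obtain f1 B1 D1 b1 \<phi>1 h1 where d1: "e1 = (f1, induced B1 (D1 \<union> desc B1 b1))" "wf_digraph B1"
     "desc_closed B1 D1" "f1 ` verts A \<subseteq> D1" "b1 \<in> verts B1"
     "iso_map (induced B1 (desc B1 b1)) \<Gamma> \<phi>1" "iso_map ?R (induced B1 D1) h1"
     "\<forall>x\<in>verts A. f1 x = h1 (fst r x)" "\<forall>x\<in>verts A. fst r x \<in> verts ?R"
     "Y = \<phi>1 ` (desc B1 b1 \<inter> D1)" "W = {w \<in> verts ?R. h1 w \<in> desc B1 b1}"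
     "Cos = (\<lambda>k. tau \<Gamma> ?R Y W (\<phi>1 \<circ> h1) \<circ> k) ` ext_auts \<Gamma> Y"
    using g1 unfolding good_def c fst_conv snd_conv by (elim exE conjE) (rule that; assumption)
  obtain f2 B2 D2 b2 \<phi>2 h2 where d2: "e2 = (f2, induced B2 (D2 \<union> desc B2 b2))" "wf_digraph B2"
     "desc_closed B2 D2" "f2 ` verts A \<subseteq> D2" "b2 \<in> verts B2"
     "iso_map (induced B2 (desc B2 b2)) \<Gamma> \<phi>2" "iso_map ?R (induced B2 D2) h2"
     "\<forall>x\<in>verts A. f2 x = h2 (fst r x)" "\<forall>x\<in>verts A. fst r x \<in> verts ?R"
     "Y = \<phi>2 ` (desc B2 b2 \<inter> D2)" "W = {w \<in> verts ?R. h2 w \<in> desc B2 b2}"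
     "Cos = (\<lambda>k. tau \<Gamma> ?R Y W (\<phi>2 \<circ> h2) \<circ> k) ` ext_auts \<Gamma> Y"
    using g2 unfolding good_def c fst_conv snd_conv by (elim exE conjE) (rule that; assumption)
  have th1: "iso_map (induced ?R W) (induced \<Gamma> Y) (\<phi>1 \<circ> h1)" by (rule theta_iso[OF d1(3,6,7,10,11)])
  have th2: "iso_map (induced ?R W) (induced \<Gamma> Y) (\<phi>2 \<circ> h2)" by (rule theta_iso[OF d2(3,6,7,10,11)])
  have WR: "W \<subseteq> verts ?R" using d1(11) by blast
  have vE1: "verts (induced B1 (desc B1 b1)) = desc B1 b1" by simp
  have YG: "Y \<subseteq> verts \<Gamma>" using d1(10) iso_mapD(3)[OF d1(6)] vE1 by blast
  have vW: "verts (induced ?R W) = W" using WR by auto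
  have vY: "verts (induced \<Gamma> Y) = Y" using YG by auto
  let ?t0 = "theta0 \<Gamma> ?R Y W"
  have t0: "iso_map (induced ?R W) (induced \<Gamma> Y) ?t0"
    unfolding theta0_def using someI[where P="iso_map (induced ?R W) (induced \<Gamma> Y)", OF th1] .
  let ?\<tau>1 = "tau \<Gamma> ?R Y W (\<phi>1 \<circ> h1)" and ?\<tau>2 = "tau \<Gamma> ?R Y W (\<phi>2 \<circ> h2)"
  have "?\<tau>1 \<circ> id \<in> Cos" using d1(12) id_ext_auts[OF YG] by blast
  then obtain k where k: "k \<in> ext_auts \<Gamma> Y" "?\<tau>1 = ?\<tau>2 \<circ> k" using d2(12) by auto
  obtain g where g: "g \<in> Aut \<Gamma>" "\<forall>x\<in>Y. g x = k x" using k(1) unfolding ext_auts_def by blast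
  have kA: "k \<in> Aut (induced \<Gamma> Y)" using k(1) unfolding ext_auts_def by blast
  have "iso_map (induced \<Gamma> Y) (induced \<Gamma> Y) k" using kA unfolding Aut_def by blast
  then have kY: "k ` Y = Y" using iso_mapD(3)[of "induced \<Gamma> Y" "induced \<Gamma> Y" k] vY by simp
  have giso: "iso_map \<Gamma> \<Gamma> g" using g(1) unfolding Aut_def by blast
  have b1: "bij_betw (\<phi>1 \<circ> h1) W Y" and b2: "bij_betw (\<phi>2 \<circ> h2) W Y" and b0: "bij_betw ?t0 W Y"
    using iso_mapD(1)[OF th1] iso_mapD(1)[OF th2] iso_mapD(1)[OF t0] vW vY by auto
  have compat: "\<forall>w\<in>verts ?R. h1 w \<in> desc B1 b1 \<longrightarrow> g (\<phi>1 (h1 w)) = \<phi>2 (h2 w)"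
  proof (intro ballI impI)
    fix w assume "w \<in> verts ?R" "h1 w \<in> desc B1 b1"
    then have w: "w \<in> W" using d1(11) by blast
    define y where "y = \<phi>1 (h1 w)"
    have y: "y \<in> Y" using b1 w unfolding y_def bij_betw_def by auto
    have "inv_into W (\<phi>1 \<circ> h1) ((\<phi>1 \<circ> h1) w) = w" using b1 w unfolding bij_betw_def by (intro inv_into_f_f) auto
    then have "inv_into W (\<phi>1 \<circ> h1) y = w" unfolding y_def by simp
    then have t1: "?\<tau>1 y = ?t0 w" using y by (simp add: tau_def)
    have ky: "k y \<in> Y" using kY y by blast
    define v where "v = inv_into W (\<phi>2 \<circ> h2) (k y)"
    have kyim: "k y \<in> (\<phi>2 \<circ> h2) ` W" using b2 ky unfolding bij_betw_def by blast
    have v: "v \<in> W" "(\<phi>2 \<circ> h2) v = k y" unfolding v_def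
      using inv_into_into[OF kyim] f_inv_into_f[OF kyim] by blast+
    have "?\<tau>2 (k y) = ?t0 v" using ky by (simp add: tau_def v_def)
    moreover have "?\<tau>2 (k y) = ?\<tau>1 y" using fun_cong[OF k(2), of y] by simp
    ultimately have "?t0 v = ?t0 w" using t1 by simp
    then have "v = w" using b0 v(1) w unfolding bij_betw_def inj_on_def by blast
    then show "g (\<phi>1 (h1 w)) = \<phi>2 (h2 w)" using v(2) g(2) y unfolding y_def by simp
  qed
  have Weq: "\<forall>w\<in>verts ?R. h1 w \<in> desc B1 b1 \<longleftrightarrow> h2 w \<in> desc B2 b2"
    using d1(11) d2(11) by blast
  have gh: "glue_half \<Gamma> ?R B1 D1 b1 \<phi>1 h1 B2 D2 b2 \<phi>2 h2 g"
    by (rule glue_half.intro[OF d1(2) d2(2) d1(3) d2(3) d1(6) d2(6) d1(7) d2(7) Weq giso compat])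
  interpret G: glue_half \<Gamma> ?R B1 D1 b1 \<phi>1 h1 B2 D2 b2 \<phi>2 h2 g by (rule gh)
  have iso: "iso_map (induced B1 (D1 \<union> desc B1 b1)) (induced B2 (D2 \<union> desc B2 b2)) G.H"
    by (rule glue_iso[OF gh])
  have "\<forall>x\<in>verts A. f2 x = G.H (f1 x)"
  proof
    fix x assume x: "x \<in> verts A"
    have fx: "f1 x \<in> D1" using d1(4) x by blast
    have "G.H (f1 x) = h2 (inv_into (verts ?R) h1 (h1 (fst r x)))" using G.H_D1(1)[OF fx] d1(8) x by simp
    also have "\<dots> = h2 (fst r x)" using d1(9) x iso_mapD(2)[OF d1(7)] by (simp add: inv_into_f_f)
    finally show "f2 x = G.H (f1 x)" using d2(8) x by simp
  qed
  then show ?thesis unfolding emb_iso_def using iso d1(1) d2(1) by auto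
qed




definition Lk :: "'a digraph \<Rightarrow> 'c digraph \<Rightarrow> nat \<Rightarrow> (('c \<Rightarrow> 'b) \<times> 'b digraph) set" where
  "Lk \<Gamma> A k = {(f, induced B (f ` verts A \<union> desc_set B Z)) | f B Z.
      in_C \<Gamma> B \<and> le_embedding f A B \<and> finite Z \<and> card Z = k \<and> Z \<subseteq> verts B}"

lemma Lk_props:
  assumes cnt: "countable (verts \<Gamma>)" and e: "e \<in> Lk \<Gamma> A k"
  shows "countable (verts (snd e))" "fst e ` verts A \<subseteq> verts (snd e)"
proof -
  obtain f B Z where d: "e = (f, induced B (f ` verts A \<union> desc_set B Z))" "in_C \<Gamma> B"
    "le_embedding f A B" "Z \<subseteq> verts B"
    using e unfolding Lk_def by blast
  have "countable (verts B)" by (rule countable_in_C[OF cnt d(2)])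
  then show "countable (verts (snd e))" using d(1) by (simp add: countable_subset[of _ "verts B"])
  have "f ` verts A \<subseteq> verts B" using d(3) unfolding le_embedding_def by blast
  then show "fst e ` verts A \<subseteq> verts (snd e)" using d(1) by auto
qed

lemma desc_set_empty[simp]: "desc_set G {} = {}" unfolding desc_set_def by simp

lemma desc_set_insert: "desc_set G (insert b Z) = desc G b \<union> desc_set G Z"
  unfolding desc_set_def by simp

lemma desc_set_Un: "desc_set G (Z1 \<union> Z2) = desc_set G Z1 \<union> desc_set G Z2"
  unfolding desc_set_def by simp

lemma base_reps:
  "\<exists>R :: (('c \<Rightarrow> 'b) \<times> 'b digraph) set. countable R \<and> R \<subseteq> Lk \<Gamma> A 0 \<and> (\<forall>e\<in>Lk \<Gamma> A 0. \<exists>r\<in>R. emb_iso A r e)"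
proof -
  have any: "emb_iso A e1 e2" if e1: "e1 \<in> Lk \<Gamma> A 0" and e2: "e2 \<in> Lk \<Gamma> A 0" for e1 e2
  proof -
    obtain f1 B1 Z1 where d1: "e1 = (f1, induced B1 (f1 ` verts A \<union> desc_set B1 Z1))"
      "le_embedding f1 A B1" "finite Z1" "card Z1 = 0"
      using e1 unfolding Lk_def by blast
    obtain f2 B2 Z2 where d2: "e2 = (f2, induced B2 (f2 ` verts A \<union> desc_set B2 Z2))"
      "le_embedding f2 A B2" "finite Z2" "card Z2 = 0"
      using e2 unfolding Lk_def by blast
    have z: "Z1 = {}" "Z2 = {}" using d1(3,4) d2(3,4) by auto
    have i1: "iso_map A (induced B1 (f1 ` verts A)) f1" by (rule le_emb_iso[OF d1(2)])
    have i2: "iso_map A (induced B2 (f2 ` verts A)) f2" by (rule le_emb_iso[OF d2(2)])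
    have i: "iso_map (induced B1 (f1 ` verts A)) (induced B2 (f2 ` verts A)) (f2 \<circ> inv_into (verts A) f1)"
      by (rule iso_map_comp[OF iso_map_inv[OF i1] i2])
    have "\<forall>x\<in>verts A. f2 x = (f2 \<circ> inv_into (verts A) f1) (f1 x)"
      using iso_mapD(2)[OF i1] by (simp add: inv_into_f_f)
    then show ?thesis unfolding emb_iso_def using i d1(1) d2(1) z by auto
  qed
  show ?thesis
  proof (cases "Lk \<Gamma> A 0 = ({} :: (('c \<Rightarrow> 'b) \<times> 'b digraph) set)")
    case True then show ?thesis by (intro exI[of _ "{}"]) simp
  next
    case False
    then obtain e0 :: "('c \<Rightarrow> 'b) \<times> 'b digraph" where e0: "e0 \<in> Lk \<Gamma> A 0" by blast
    have "\<forall>e\<in>Lk \<Gamma> A 0. \<exists>r\<in>{e0}. emb_iso A r e" using e0 any by blast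
    moreover have "countable {e0}" by simp
    ultimately show ?thesis using e0 by blast
  qed
qed

lemma countable_reps:
  assumes C: "countable CS" and ex: "\<forall>e\<in>S. \<exists>c\<in>CS. P e c"
    and un: "\<And>e1 e2 c. e1 \<in> S \<Longrightarrow> e2 \<in> S \<Longrightarrow> P e1 c \<Longrightarrow> P e2 c \<Longrightarrow> rel e1 e2"
  shows "\<exists>R. countable R \<and> R \<subseteq> S \<and> (\<forall>e\<in>S. \<exists>r\<in>R. rel r e)"
proof -
  let ?C = "{c \<in> CS. \<exists>e\<in>S. P e c}"
  let ?R = "(\<lambda>c. SOME e. e \<in> S \<and> P e c) ` ?C"
  have "countable ?C" using C by (rule countable_subset[rotated]) blast
  then have "countable ?R" by blast
  moreover have s: "\<And>c. c \<in> ?C \<Longrightarrow> (SOME e. e \<in> S \<and> P e c) \<in> S \<and> P (SOME e. e \<in> S \<and> P e c) c"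
    by (rule someI_ex) blast
  moreover have "\<forall>e\<in>S. \<exists>r\<in>?R. rel r e"
  proof
    fix e assume e: "e \<in> S"
    then obtain c where c: "c \<in> CS" "P e c" using ex by blast
    then have cc: "c \<in> ?C" using e by blast
    then show "\<exists>r\<in>?R. rel r e" using s[OF cc] un e c(2) by blast
  qed
  ultimately show ?thesis using s by blast
qed

lemma countable_FG:
  assumes cnt: "countable (verts \<Gamma>)"
  shows "countable {Y. desc_closed \<Gamma> Y \<and> fg_set \<Gamma> Y}"
proof -
  have "{Y. desc_closed \<Gamma> Y \<and> fg_set \<Gamma> Y} \<subseteq> desc_set \<Gamma> ` {Z. finite Z \<and> Z \<subseteq> verts \<Gamma>}"
  proof
    fix Y assume "Y \<in> {Y. desc_closed \<Gamma> Y \<and> fg_set \<Gamma> Y}"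
    then have "Y \<subseteq> verts \<Gamma>" "\<exists>Z. finite Z \<and> Z \<subseteq> Y \<and> Y = desc_set \<Gamma> Z"
      unfolding desc_closed_def fg_set_def by auto
    then show "Y \<in> desc_set \<Gamma> ` {Z. finite Z \<and> Z \<subseteq> verts \<Gamma>}" by blast
  qed
  moreover have "countable (desc_set \<Gamma> ` {Z. finite Z \<and> Z \<subseteq> verts \<Gamma>})"
    using countable_Collect_finite_subset[OF cnt] by blast
  ultimately show ?thesis by (rule countable_subset)
qed




lemma desc_set_UN: "desc_set G (\<Union>i\<in>I. Z i) = (\<Union>i\<in>I. desc_set G (Z i))"
  unfolding desc_set_def by blast

lemma code_exists:
  fixes \<Gamma> :: "'a digraph" and A :: "'c digraph" and e :: "('c \<Rightarrow> 'b) \<times> 'b digraph"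
  assumes wf: "wf_digraph \<Gamma>" and cnt: "countable (verts \<Gamma>)" and Ain: "in_C \<Gamma> A"
    and Rk: "Rk \<subseteq> Lk \<Gamma> A k" and reps: "\<forall>e\<in>Lk \<Gamma> A k. \<exists>r\<in>Rk. emb_iso A r e"
    and e: "e \<in> Lk \<Gamma> A (Suc k)"
  shows "\<exists>r\<in>Rk. \<exists>Y\<in>{Y. desc_closed \<Gamma> Y \<and> fg_set \<Gamma> Y}.
           \<exists>W\<in>{desc_set (snd r) Z | Z. finite Z \<and> Z \<subseteq> verts (snd r)}.
           \<exists>Cos\<in>left_cosets (induced \<Gamma> Y) (ext_auts \<Gamma> Y). good \<Gamma> A e (r, Y, W, Cos)"
proof -
  obtain f B Z where d: "e = (f, induced B (f ` verts A \<union> desc_set B Z))" "in_C \<Gamma> B"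
    "le_embedding f A B" "finite Z" "card Z = Suc k" "Z \<subseteq> verts B"
    using e unfolding Lk_def by blast
  obtain b where bZ: "b \<in> Z" using d(5) by (metis card.empty ex_in_conv nat.distinct(1))
  define Z0 where "Z0 = Z - {b}"
  have Z0: "finite Z0" "card Z0 = k" "Z0 \<subseteq> verts B" "Z = insert b Z0"
    using d(4,5,6) bZ unfolding Z0_def by auto
  define D where "D = f ` verts A \<union> desc_set B Z0"
  have eD: "(f, induced B D) \<in> Lk \<Gamma> A k"
    unfolding Lk_def D_def using d(2,3) Z0(1,2,3) by blast
  then obtain r where r: "r \<in> Rk" "emb_iso A r (f, induced B D)" using reps by blast
  then obtain h where h: "iso_map (snd r) (induced B D) h" "\<forall>x\<in>verts A. f x = h (fst r x)"
    unfolding emb_iso_def by auto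
  have fr: "\<forall>x\<in>verts A. fst r x \<in> verts (snd r)"
    using Lk_props(2)[OF cnt, of r] r(1) Rk by blast
  have wfB: "wf_digraph B" using d(2) unfolding in_C_def by blast
  have dcA: "desc_closed B (f ` verts A)" using d(3) unfolding le_embedding_def by blast
  have dcD: "desc_closed B D" unfolding D_def
    by (rule desc_closed_Un[OF dcA desc_closed_desc_set[OF wfB]])
  have fAD: "f ` verts A \<subseteq> D" unfolding D_def by blast
  have bV: "b \<in> verts B" using bZ d(6) by blast
  obtain \<phi> where \<phi>: "iso_map (induced B (desc B b)) \<Gamma> \<phi>"
    using d(2) bV unfolding in_C_def isomorphic_def by blast
  have eq: "e = (f, induced B (D \<union> desc B b))"
    using d(1) Z0(4) unfolding D_def by (simp add: desc_set_insert Un_ac)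
  define Y where "Y = \<phi> ` (desc B b \<inter> D)"
  define W where "W = {w \<in> verts (snd r). h w \<in> desc B b}"
  define Cos where "Cos = (\<lambda>k. tau \<Gamma> (snd r) Y W (\<phi> \<circ> h) \<circ> k) ` ext_auts \<Gamma> Y"
  have good: "good \<Gamma> A e (r, Y, W, Cos)"
    unfolding good_def fst_conv snd_conv
    apply (rule exI[of _ f], rule exI[of _ B], rule exI[of _ D], rule exI[of _ b], rule exI[of _ \<phi>], rule exI[of _ h])
    using eq wfB dcD fAD bV \<phi> h fr Y_def W_def Cos_def by blast
  obtain ZA where ZA: "finite ZA" "ZA \<subseteq> verts A" "verts A = desc_set A ZA"
    using Ain unfolding in_C_def fg_digraph_def fg_set_def by blast
  have fA: "f ` verts A = desc_set B (f ` ZA)"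
    using le_emb_desc_set[OF d(3) ZA(2)] ZA(3) by simp
  define Zg where "Zg = f ` ZA \<union> Z0"
  have Dg: "D = desc_set B Zg" unfolding D_def Zg_def using fA by (simp add: desc_set_Un)
  have Zgv: "Zg \<subseteq> verts B" unfolding Zg_def using ZA(2) Z0(3) d(3) unfolding le_embedding_def by blast
  have "\<forall>z\<in>Zg. \<exists>Z'. finite Z' \<and> Z' \<subseteq> desc B b \<inter> desc B z \<and> desc B b \<inter> desc B z = desc_set B Z'"
  proof
    fix z assume z: "z \<in> Zg"
    let ?S = "desc B b \<inter> desc B z"
    have "fg_digraph (induced B ?S)" using d(2) bV z Zgv unfolding in_C_def by blast
    then have "fg_set (induced B ?S) (verts (induced B ?S))" unfolding fg_digraph_def .
    then obtain Z' where Z0': "finite Z'" "Z' \<subseteq> verts (induced B ?S)" "verts (induced B ?S) = desc_set (induced B ?S) Z'"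
      unfolding fg_set_def by blast
    then have Z': "finite Z'" "Z' \<subseteq> ?S \<inter> verts B" "?S \<inter> verts B = desc_set (induced B ?S) Z'"
      by (simp_all only: verts_induced)
    have Sv: "?S \<inter> verts B = ?S" using desc_sub_verts[of B b] by blast
    have dcS: "desc_closed B ?S" by (rule desc_closed_Int[OF desc_closed_desc[OF wfB] desc_closed_desc[OF wfB]])
    have "desc_set (induced B ?S) Z' = desc_set B Z'" using desc_set_induced[OF dcS] Z'(2) by blast
    then show "\<exists>Z'. finite Z' \<and> Z' \<subseteq> ?S \<and> ?S = desc_set B Z'" using Z' Sv by auto
  qed
  then obtain Zf where Zf: "\<forall>z\<in>Zg. finite (Zf z) \<and> Zf z \<subseteq> desc B b \<inter> desc B z \<and> desc B b \<inter> desc B z = desc_set B (Zf z)"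
    by metis
  define Zt where "Zt = (\<Union>z\<in>Zg. Zf z)"
  have Zgf: "finite Zg" unfolding Zg_def using ZA(1) Z0(1) by blast
  have Ztf: "finite Zt" unfolding Zt_def using Zgf Zf by blast
  have DZ: "\<And>z. z \<in> Zg \<Longrightarrow> desc B z \<subseteq> D" unfolding Dg desc_set_def by blast
  have Ztsub: "Zt \<subseteq> desc B b \<inter> D" unfolding Zt_def using Zf DZ by blast
  have Zte: "desc_set B Zt = desc B b \<inter> D"
  proof -
    have "desc_set B Zt = (\<Union>z\<in>Zg. desc_set B (Zf z))" unfolding Zt_def by (rule desc_set_UN)
    also have "\<dots> = (\<Union>z\<in>Zg. desc B b \<inter> desc B z)" using Zf by simp
    also have "\<dots> = desc B b \<inter> D" unfolding Dg desc_set_def by blast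
    finally show ?thesis .
  qed
  have dcE: "desc_closed B (desc B b)" by (rule desc_closed_desc[OF wfB])
  have YE: "Y = desc_set \<Gamma> (\<phi> ` Zt)"
  proof -
    have "Y = \<phi> ` desc_set B Zt" unfolding Y_def Zte ..
    also have "desc_set B Zt = desc_set (induced B (desc B b)) Zt"
      using desc_set_induced[OF dcE, of Zt] Ztsub by auto
    also have "\<phi> ` desc_set (induced B (desc B b)) Zt = desc_set \<Gamma> (\<phi> ` Zt)"
      by (rule desc_set_iso[OF \<phi>]) (use Ztsub in auto)
    finally show ?thesis .
  qed
  have phiv: "\<phi> ` desc B b = verts \<Gamma>" using iso_mapD(3)[OF \<phi>] by simp
  have YG: "Y \<subseteq> verts \<Gamma>" unfolding Y_def using phiv by blast
  have YFG: "Y \<in> {Y. desc_closed \<Gamma> Y \<and> fg_set \<Gamma> Y}"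
  proof -
    have "desc_closed \<Gamma> Y" unfolding YE by (rule desc_closed_desc_set[OF wf])
    moreover have "\<phi> ` Zt \<subseteq> Y"
    proof
      fix x assume x: "x \<in> \<phi> ` Zt"
      then have "x \<in> verts \<Gamma>" using Ztsub phiv by blast
      then have "x \<in> desc \<Gamma> x" by (rule self_in_desc)
      then show "x \<in> Y" unfolding YE desc_set_def using x by blast
    qed
    ultimately show ?thesis unfolding fg_set_def using YE Ztf by blast
  qed
  let ?hi = "inv_into (verts (snd r)) h"
  have hiso: "iso_map (induced B D) (snd r) ?hi" by (rule iso_map_inv[OF h(1)])
  have vRD: "h ` verts (snd r) = D" using iso_mapD(3)[OF h(1)] desc_closed_Int_verts[OF dcD] by simp
  have injh: "inj_on h (verts (snd r))" using iso_mapD(2)[OF h(1)] .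
  have WE: "W = ?hi ` (desc B b \<inter> D)"
  proof
    show "W \<subseteq> ?hi ` (desc B b \<inter> D)"
    proof
      fix w assume w: "w \<in> W"
      then have "w \<in> verts (snd r)" "h w \<in> desc B b" unfolding W_def by auto
      moreover have "?hi (h w) = w" using calculation(1) injh by (simp add: inv_into_f_f)
      ultimately show "w \<in> ?hi ` (desc B b \<inter> D)" using vRD by (metis IntI image_eqI)
    qed
    show "?hi ` (desc B b \<inter> D) \<subseteq> W"
    proof
      fix w assume "w \<in> ?hi ` (desc B b \<inter> D)"
      then obtain x where x: "x \<in> desc B b" "x \<in> D" "w = ?hi x" by blast
      have xi: "x \<in> h ` verts (snd r)" using x(2) vRD by blast
      have "w \<in> verts (snd r)" using x(3) inv_into_into[OF xi] by simp
      moreover have "h w = x" using x(3) f_inv_into_f[OF xi] by simp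
      ultimately show "w \<in> W" unfolding W_def using x(1) by blast
    qed
  qed
  have WFG: "W \<in> {desc_set (snd r) Z | Z. finite Z \<and> Z \<subseteq> verts (snd r)}"
  proof -
    have "W = ?hi ` desc_set (induced B D) Zt"
      unfolding WE using desc_set_induced[OF dcD, of Zt] Ztsub Zte by auto
    also have "\<dots> = desc_set (snd r) (?hi ` Zt)"
      by (rule desc_set_iso[OF hiso]) (use Ztsub desc_closed_Int_verts[OF dcD] in auto)
    finally have "W = desc_set (snd r) (?hi ` Zt)" .
    moreover have "?hi ` Zt \<subseteq> verts (snd r)" using Ztsub vRD by (auto intro: inv_into_into)
    ultimately show ?thesis using Ztf by blast
  qed
  have WR: "W \<subseteq> verts (snd r)" unfolding W_def by blast
  have th: "iso_map (induced (snd r) W) (induced \<Gamma> Y) (\<phi> \<circ> h)"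
    by (rule theta_iso[OF dcD \<phi> h(1) Y_def W_def])
  have "tau \<Gamma> (snd r) Y W (\<phi> \<circ> h) \<in> Aut (induced \<Gamma> Y)" by (rule tau_Aut[OF th WR YG])
  then have CosL: "Cos \<in> left_cosets (induced \<Gamma> Y) (ext_auts \<Gamma> Y)"
    unfolding Cos_def left_cosets_def by blast
  show ?thesis using r(1) YFG WFG CosL good by blast
qed




lemma step_reps:
  fixes \<Gamma> :: "'a digraph" and A :: "'c digraph" and Rk :: "(('c \<Rightarrow> 'b) \<times> 'b digraph) set"
  assumes wf: "wf_digraph \<Gamma>" and cnt: "countable (verts \<Gamma>)"
    and C2: "\<forall>X. desc_closed \<Gamma> X \<and> fg_set \<Gamma> X \<longrightarrow>
               countable (left_cosets (induced \<Gamma> X) (ext_auts \<Gamma> X))"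
    and Ain: "in_C \<Gamma> A"
    and Rkc: "countable Rk" and Rk: "Rk \<subseteq> Lk \<Gamma> A k" and reps: "\<forall>e\<in>Lk \<Gamma> A k. \<exists>r\<in>Rk. emb_iso A r e"
  shows "\<exists>R :: (('c \<Rightarrow> 'b) \<times> 'b digraph) set. countable R \<and> R \<subseteq> Lk \<Gamma> A (Suc k)
           \<and> (\<forall>e\<in>Lk \<Gamma> A (Suc k). \<exists>r\<in>R. emb_iso A r e)"
proof -
  let ?FG = "{Y. desc_closed \<Gamma> Y \<and> fg_set \<Gamma> Y}"
  let ?FW = "\<lambda>r :: ('c \<Rightarrow> 'b) \<times> 'b digraph. {desc_set (snd r) Z | Z. finite Z \<and> Z \<subseteq> verts (snd r)}"
  let ?CS = "SIGMA r:Rk. SIGMA Y:?FG. SIGMA W:?FW r. left_cosets (induced \<Gamma> Y) (ext_auts \<Gamma> Y)"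
  have cFW: "countable (?FW r)" if r: "r \<in> Rk" for r
  proof -
    have "countable (verts (snd r))" using Lk_props(1)[OF cnt] r Rk by blast
    then have "countable (desc_set (snd r) ` {Z. finite Z \<and> Z \<subseteq> verts (snd r)})"
      using countable_Collect_finite_subset by blast
    moreover have "?FW r = desc_set (snd r) ` {Z. finite Z \<and> Z \<subseteq> verts (snd r)}" by blast
    ultimately show ?thesis by simp
  qed
  have cC: "countable (left_cosets (induced \<Gamma> Y) (ext_auts \<Gamma> Y))" if "Y \<in> ?FG" for Y
    using C2 that by blast
  have cCS: "countable ?CS"
  proof (rule countable_SIGMA[OF Rkc])
    fix r assume r: "r \<in> Rk"
    show "countable (SIGMA Y:?FG. SIGMA W:?FW r. left_cosets (induced \<Gamma> Y) (ext_auts \<Gamma> Y))"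
    proof (rule countable_SIGMA[OF countable_FG[OF cnt]])
      fix Y assume Y: "Y \<in> ?FG"
      show "countable (SIGMA W:?FW r. left_cosets (induced \<Gamma> Y) (ext_auts \<Gamma> Y))"
        by (rule countable_SIGMA[OF cFW[OF r] cC[OF Y]])
    qed
  qed
  have ex: "\<forall>e\<in>Lk \<Gamma> A (Suc k). \<exists>c\<in>?CS. good \<Gamma> A e c"
  proof
    fix e :: "('c \<Rightarrow> 'b) \<times> 'b digraph" assume e: "e \<in> Lk \<Gamma> A (Suc k)"
    obtain r Y W Cos where c: "r \<in> Rk" "Y \<in> ?FG" "W \<in> ?FW r"
      "Cos \<in> left_cosets (induced \<Gamma> Y) (ext_auts \<Gamma> Y)" "good \<Gamma> A e (r, Y, W, Cos)"
      using code_exists[OF wf cnt Ain Rk reps e] by blast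
    have "(r, Y, W, Cos) \<in> ?CS" using c(1-4) by (intro SigmaI)
    then show "\<exists>c\<in>?CS. good \<Gamma> A e c" using c(5) by blast
  qed
  show ?thesis
    by (rule countable_reps[OF cCS ex]) (rule good_unique)
qed

theorem lemma4p2:
  fixes \<Gamma> :: "'a digraph" and A :: "'c digraph"
  assumes wf: "wf_digraph \<Gamma>"
    and cnt: "countable (verts \<Gamma>)"
    and C1: "\<forall>u\<in>verts \<Gamma>. isomorphic (induced \<Gamma> (desc \<Gamma> u)) \<Gamma>"
    and C2: "\<forall>X. desc_closed \<Gamma> X \<and> fg_set \<Gamma> X \<longrightarrow>
               countable (left_cosets (induced \<Gamma> X) (ext_auts \<Gamma> X))"
    and A: "in_C \<Gamma> A"
  shows "\<exists>R :: (('c \<Rightarrow> 'b) \<times> 'b digraph) set. countable R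
           \<and> (\<forall>e\<in>R. in_C \<Gamma> (snd e) \<and> le_embedding (fst e) A (snd e))
           \<and> (\<forall>f B. in_C \<Gamma> B \<and> le_embedding f A B \<longrightarrow> (\<exists>e\<in>R. emb_iso A e (f, B)))"
proof -
  have reps: "\<forall>k. \<exists>R :: (('c \<Rightarrow> 'b) \<times> 'b digraph) set. countable R \<and> R \<subseteq> Lk \<Gamma> A k
           \<and> (\<forall>e\<in>Lk \<Gamma> A k. \<exists>r\<in>R. emb_iso A r e)"
  proof
    fix k show "\<exists>R :: (('c \<Rightarrow> 'b) \<times> 'b digraph) set. countable R \<and> R \<subseteq> Lk \<Gamma> A k
           \<and> (\<forall>e\<in>Lk \<Gamma> A k. \<exists>r\<in>R. emb_iso A r e)"
    proof (induction k)
      case 0 show ?case by (rule base_reps)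
    next
      case (Suc k)
      then obtain Rk :: "(('c \<Rightarrow> 'b) \<times> 'b digraph) set" where
        "countable Rk" "Rk \<subseteq> Lk \<Gamma> A k" "\<forall>e\<in>Lk \<Gamma> A k. \<exists>r\<in>Rk. emb_iso A r e" by blast
      then show ?case by (rule step_reps[OF wf cnt C2 A])
    qed
  qed
  then have "\<exists>RR :: nat \<Rightarrow> (('c \<Rightarrow> 'b) \<times> 'b digraph) set. \<forall>k. countable (RR k) \<and> RR k \<subseteq> Lk \<Gamma> A k \<and> (\<forall>e\<in>Lk \<Gamma> A k. \<exists>r\<in>RR k. emb_iso A r e)"
    by (rule choice)
  then obtain RR :: "nat \<Rightarrow> (('c \<Rightarrow> 'b) \<times> 'b digraph) set" where
    RR0: "\<forall>k. countable (RR k) \<and> RR k \<subseteq> Lk \<Gamma> A k \<and> (\<forall>e\<in>Lk \<Gamma> A k. \<exists>r\<in>RR k. emb_iso A r e)"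
    by blast
  have RR: "\<And>k. countable (RR k)" "\<And>k. RR k \<subseteq> Lk \<Gamma> A k" "\<And>k. \<forall>e\<in>Lk \<Gamma> A k. \<exists>r\<in>RR k. emb_iso A r e"
    using RR0 by blast+
  define U where "U = (\<Union>k. RR k)"
  have Uc: "countable U" unfolding U_def using RR(1) by blast
  define Full where "Full = {e :: ('c \<Rightarrow> 'b) \<times> 'b digraph. in_C \<Gamma> (snd e) \<and> le_embedding (fst e) A (snd e)}"
  let ?pick = "\<lambda>r. SOME e. e \<in> Full \<and> emb_iso A r e"
  let ?C = "{r \<in> U. \<exists>e\<in>Full. emb_iso A r e}"
  define R where "R = ?pick ` ?C"
  have pick: "?pick r \<in> Full \<and> emb_iso A r (?pick r)" if "r \<in> ?C" for r
  proof -
    have "\<exists>e. e \<in> Full \<and> emb_iso A r e" using that by blast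
    then show ?thesis by (rule someI_ex[of "\<lambda>e. e \<in> Full \<and> emb_iso A r e"])
  qed
  have "countable ?C" using Uc by (rule countable_subset[rotated]) blast
  then have Rc: "countable R" unfolding R_def by blast
  have R1: "\<forall>e\<in>R. in_C \<Gamma> (snd e) \<and> le_embedding (fst e) A (snd e)"
  proof
    fix e assume "e \<in> R"
    then obtain r where r: "r \<in> ?C" "e = ?pick r" unfolding R_def by blast
    then have "e \<in> Full" using pick[OF r(1)] by simp
    then show "in_C \<Gamma> (snd e) \<and> le_embedding (fst e) A (snd e)" unfolding Full_def by simp
  qed
  have R2: "\<forall>f B. in_C \<Gamma> B \<and> le_embedding f A B \<longrightarrow> (\<exists>e\<in>R. emb_iso A e (f, B))"
  proof (intro allI impI)
    fix f and B :: "'b digraph" assume fb: "in_C \<Gamma> B \<and> le_embedding f A B"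
    obtain ZB where ZB: "finite ZB" "ZB \<subseteq> verts B" "verts B = desc_set B ZB"
      using fb unfolding in_C_def fg_digraph_def fg_set_def by blast
    have wfB: "wf_digraph B" using fb unfolding in_C_def by blast
    have "f ` verts A \<subseteq> verts B" using fb unfolding le_embedding_def by blast
    then have "f ` verts A \<union> desc_set B ZB = verts B" using ZB(3) by blast
    then have "induced B (f ` verts A \<union> desc_set B ZB) = B" using induced_verts[OF wfB] by simp
    moreover have "(f, induced B (f ` verts A \<union> desc_set B ZB)) \<in> Lk \<Gamma> A (card ZB)"
      unfolding Lk_def using fb ZB(1,2) by blast
    ultimately have "(f, B) \<in> Lk \<Gamma> A (card ZB)" by simp
    then obtain r where r: "r \<in> RR (card ZB)" "emb_iso A r (f, B)" using RR(3) by blast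
    have rU: "r \<in> U" unfolding U_def using r(1) by blast
    have fbF: "(f, B) \<in> Full" unfolding Full_def using fb by simp
    have rC: "r \<in> ?C" using rU fbF r(2) by blast
    have rL: "r \<in> Lk \<Gamma> A (card ZB)" using r(1) RR(2) by blast
    have fr: "fst r ` verts A \<subseteq> verts (snd r)" by (rule Lk_props(2)[OF cnt rL])
    have "emb_iso A (?pick r) r" by (rule emb_iso_sym[OF conjunct2[OF pick[OF rC]] fr])
    then have "emb_iso A (?pick r) (f, B)" using emb_iso_trans r(2) by blast
    moreover have "?pick r \<in> R" unfolding R_def using rC by blast
    ultimately show "\<exists>e\<in>R. emb_iso A e (f, B)" by blast
  qed
  show ?thesis using Rc R1 R2 by blast
qed



end
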